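(* Let $u\ge0$ be a function in the Kato class $K_d$ satisfying $u(x)=C_0|x|^{-\alpha}(1+o(1))$ as $|x|\to\infty$ for some $\alpha>d$ and $C_0>0$, and let $(\xi_q)_{q\in\mathbb{Z}^d}$ be i.i.d. $\mathbb{R}^d$-valued random variables with $\mathbb{P}(\xi_q\in dx)=\exp(-|x|^\theta)\,dx/Z(d,\theta)$ for some $\theta>0$. Then almost every sample function of $V_\xi(x)=\sum_{q\in\mathbb{Z}^d}u(x-q-\xi_q)$ belongs to the local Kato class $K_{d,loc}$.
   Context: $Z(d,\theta)$ is the normalizing constant. The Kato class $K_d$: for $d\ge2$, the set of measurable $V$ with $\lim_{r\downarrow0}\sup_x\int_{|x-y|<r}g_d(x-y)|V(y)|\,dy=0$, where $g_d(x)=|x|^{2-d}$ for $d\ge3$ and $g_2(x)=-\log|x|$; for $d=1$, the set of $V$ with $\sup_x\int_{|x-y|\le1}|V(y)|\,dy<\infty$. $K_{d,loc}$ is the set of $V$ such that $1_{B(R)}V\in K_d$ for every $R>0$, where $B(R)$ is the ball of radius $R$ centered at $0$. *)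

theory Defs
  imports "HOL-Probability.Probability"
begin

definition green_kernel :: "real ^ 'n \<Rightarrow> real" where
  "green_kernel x = (if CARD('n) \<ge> 3 then norm x powr (2 - real CARD('n))
                     else - ln (norm x))"

text \<open>Kato class K_d, for nonnegative extended-valued (ennreal) functions;
  |V| = V here.\<close>
definition kato_class :: "(real ^ 'n \<Rightarrow> ennreal) \<Rightarrow> bool" where
  "kato_class V \<longleftrightarrow> V \<in> borel_measurable lebesgue \<and>
    (if CARD('n) \<ge> 2 then
       ((\<lambda>r. SUP x. \<integral>\<^sup>+ y. indicator (ball x r) y * ennreal (green_kernel (x - y)) * V y \<partial>lebesgue)
          \<longlongrightarrow> 0) (at_right 0)
     else (SUP x. \<integral>\<^sup>+ y. indicator (cball x 1) y * V y \<partial>lebesgue) < \<infinity>)"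

definition kato_class_loc :: "(real ^ 'n \<Rightarrow> ennreal) \<Rightarrow> bool" where
  "kato_class_loc V \<longleftrightarrow> (\<forall>R>0. kato_class (\<lambda>y. indicator (ball 0 R) y * V y))"

definition lattice_pt :: "int ^ 'n \<Rightarrow> real ^ 'n" where
  "lattice_pt q = (\<chi> i. real_of_int (q $ i))"

definition Znorm :: "real \<Rightarrow> 'n::finite itself \<Rightarrow> real" where
  "Znorm \<theta> _ = (\<integral>x. exp (- (norm (x :: real ^ 'n) powr \<theta>)) \<partial>lborel)"

definition V_xi :: "(real ^ 'n \<Rightarrow> real) \<Rightarrow> (int ^ 'n \<Rightarrow> 'w \<Rightarrow> real ^ 'n) \<Rightarrow> 'w \<Rightarrow> real ^ 'n \<Rightarrow> ennreal" where
  "V_xi u \<xi> \<omega> x = (\<Sum>\<^sub>\<infinity> q. ennreal (u (x - lattice_pt q - \<xi> q \<omega>)))"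

end

theory Submission
  imports Defs "HOL-Real_Asymp.Real_Asymp"
begin


lemma lebesgue_shift_distr:
  fixes a :: "real ^ 'n"
  shows "distr lebesgue lebesgue (\<lambda>x. a + x) = lebesgue"
    and "(\<lambda>x. a + x) \<in> lebesgue \<rightarrow>\<^sub>M lebesgue"
proof -
  have T: "(\<lambda>x::real^'n. a + (\<Sum>j\<in>Basis. (1 * (x \<bullet> j)) *\<^sub>R j)) = (\<lambda>x. a + x)"
    by (simp add: euclidean_representation)
  have "lebesgue = density (distr lebesgue lebesgue (\<lambda>x. a + x)) (\<lambda>_. 1)"
    using lebesgue_affine_euclidean[of "\<lambda>_. 1" a] unfolding T by simp
  then show "distr lebesgue lebesgue (\<lambda>x. a + x) = lebesgue" by (simp add: density_1)
  show "(\<lambda>x. a + x) \<in> lebesgue \<rightarrow>\<^sub>M lebesgue"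
    using lebesgue_affine_measurable[of "\<lambda>_. 1" a] unfolding T by simp
qed

lemma nn_lebesgue_shift:
  fixes f :: "real ^ 'n \<Rightarrow> ennreal"
  assumes f: "f \<in> borel_measurable lebesgue"
  shows "(\<integral>\<^sup>+y. f y \<partial>lebesgue) = (\<integral>\<^sup>+y. f (a + y) \<partial>lebesgue)"
proof -
  have "(\<integral>\<^sup>+y. f y \<partial>lebesgue) = (\<integral>\<^sup>+y. f y \<partial>distr lebesgue lebesgue (\<lambda>x. a + x))"
    by (simp add: lebesgue_shift_distr(1))
  also have "\<dots> = (\<integral>\<^sup>+y. f (a + y) \<partial>lebesgue)"
    by (rule nn_integral_distr[OF lebesgue_shift_distr(2)]) (simp add: f)
  finally show ?thesis .
qed

lemma measurable_shift_lebesgue: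
  fixes f :: "real ^ 'n \<Rightarrow> ennreal"
  assumes f: "f \<in> borel_measurable lebesgue"
  shows "(\<lambda>y. f (a + y)) \<in> borel_measurable lebesgue"
  using measurable_comp[OF lebesgue_shift_distr(2) f] by (simp add: o_def)

lemma measurable_shift_lebesgue':
  fixes f :: "real ^ 'n \<Rightarrow> ennreal"
  assumes f: "f \<in> borel_measurable lebesgue"
  shows "(\<lambda>y. f (y - a)) \<in> borel_measurable lebesgue"
  using measurable_shift_lebesgue[OF f, of "-a"] by (simp add: algebra_simps)

lemma green_meas[measurable]: "green_kernel \<in> borel_measurable (borel :: (real^'n) measure)"
  unfolding green_kernel_def by measurable

lemma borel_to_lebesgue: "f \<in> borel_measurable borel \<Longrightarrow> f \<in> borel_measurable (lebesgue :: (real^'n) measure)"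
  by (simp add: measurable_completion measurable_lborel1)


definition KI :: "(real^'n \<Rightarrow> (real^'n) set) \<Rightarrow> (real^'n \<Rightarrow> ennreal) \<Rightarrow> (real^'n \<Rightarrow> ennreal) \<Rightarrow> real^'n \<Rightarrow> ennreal" where
  "KI S \<phi> V x = (\<integral>\<^sup>+ y. indicator (S x) y * \<phi> (x - y) * V y \<partial>lebesgue)"

definition gk :: "real^'n \<Rightarrow> ennreal" where "gk z = ennreal (green_kernel z)"

lemma gk_meas[measurable]: "gk \<in> borel_measurable borel"
  unfolding gk_def by measurable

lemma kato_alt:
  "kato_class V \<longleftrightarrow> V \<in> borel_measurable lebesgue \<and>
    (if 2 \<le> CARD('n) then ((\<lambda>r. SUP x. KI (\<lambda>x. ball x r) gk V x) \<longlongrightarrow> 0) (at_right 0)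
     else (SUP x. KI (\<lambda>x. cball x 1) (\<lambda>_. 1) V x) < \<infinity>)"
  for V :: "real^'n \<Rightarrow> ennreal"
  unfolding kato_class_def KI_def gk_def by simp

lemma KI_meas:
  fixes V \<phi> :: "real^'n \<Rightarrow> ennreal"
  assumes V: "V \<in> borel_measurable lebesgue" and \<phi>: "\<phi> \<in> borel_measurable borel"
    and S: "S x \<in> sets borel"
  shows "(\<lambda>y. indicator (S x) y * \<phi> (x - y) * V y) \<in> borel_measurable lebesgue"
proof -
  have [measurable]: "S x \<in> sets borel" using S .
  have [measurable]: "\<phi> \<in> borel_measurable borel" using \<phi> .
  have "(\<lambda>y. \<phi> (x - y)) \<in> borel_measurable borel"
    by (rule measurable_compose[OF _ \<phi>]) simp
  then have "(\<lambda>y. indicator (S x) y * \<phi> (x - y)) \<in> borel_measurable borel"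
    using S by (intro borel_measurable_times_ennreal borel_measurable_indicator) auto
  then have "(\<lambda>y. indicator (S x) y * \<phi> (x - y)) \<in> borel_measurable lebesgue"
    by (rule borel_to_lebesgue)
  then show ?thesis using V by measurable
qed

lemma KI_shift:
  fixes V \<phi> :: "real^'n \<Rightarrow> ennreal"
  assumes V: "V \<in> borel_measurable lebesgue" and \<phi>: "\<phi> \<in> borel_measurable borel"
    and S: "\<And>x. S x \<in> sets borel" and Sa: "\<And>x z. (a + z \<in> S x) = (z \<in> S (x - a))"
  shows "KI S \<phi> (\<lambda>y. V (y - a)) x = KI S \<phi> V (x - a)"
proof -
  have m: "(\<lambda>y. indicator (S x) y * \<phi> (x - y) * V (y - a)) \<in> borel_measurable lebesgue"
    by (rule KI_meas[OF measurable_shift_lebesgue'[OF V] \<phi> S])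
  have "KI S \<phi> (\<lambda>y. V (y - a)) x = (\<integral>\<^sup>+ y. indicator (S x) (a + y) * \<phi> (x - (a + y)) * V (a + y - a) \<partial>lebesgue)"
    unfolding KI_def by (rule nn_lebesgue_shift[OF m])
  also have "\<dots> = KI S \<phi> V (x - a)"
  proof -
    have i: "\<And>y. indicator (S x) (a + y) = (indicator (S (x - a)) y :: ennreal)"
      by (simp add: indicator_def Sa)
    show ?thesis unfolding KI_def
      by (intro nn_integral_cong) (simp only: i, simp add: algebra_simps)
  qed
  finally show ?thesis .
qed

lemma SUP_shift:
  fixes F :: "real^'n \<Rightarrow> ennreal"
  shows "(SUP x. F (x - a)) = (SUP x. F x)"
proof (rule antisym)
  show "(SUP x. F (x - a)) \<le> (SUP x. F x)" by (rule SUP_least) (rule SUP_upper, simp)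
  show "(SUP x. F x) \<le> (SUP x. F (x - a))"
  proof (rule SUP_least)
    fix x have "F x = F ((x + a) - a)" by simp
    also have "\<dots> \<le> (SUP x. F (x - a))" by (rule SUP_upper) simp
    finally show "F x \<le> (SUP x. F (x - a))" .
  qed
qed

lemma kato_shift:
  fixes V :: "real^'n \<Rightarrow> ennreal"
  assumes "kato_class V"
  shows "kato_class (\<lambda>y. V (y - a))"
proof -
  have V: "V \<in> borel_measurable lebesgue" using assms by (simp add: kato_alt)
  have e1: "(SUP x. KI (\<lambda>x. ball x r) gk (\<lambda>y. V (y - a)) x) = (SUP x. KI (\<lambda>x. ball x r) gk V x)" for r
    by (subst KI_shift[OF V]) (auto simp: dist_norm algebra_simps intro: SUP_shift)
  have e2: "(SUP x. KI (\<lambda>x. cball x 1) (\<lambda>_. 1) (\<lambda>y. V (y - a)) x) = (SUP x. KI (\<lambda>x. cball x 1) (\<lambda>_. 1) V x)"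
    by (subst KI_shift[OF V]) (auto simp: dist_norm algebra_simps intro: SUP_shift)
  show ?thesis using assms measurable_shift_lebesgue'[OF V, of a] by (auto simp: kato_alt e1 e2 split: if_splits)
qed


lemma KI_mono:
  "(\<And>y. W y \<le> V y) \<Longrightarrow> KI S \<phi> W x \<le> KI S \<phi> V x"
  unfolding KI_def by (intro nn_integral_mono mult_left_mono) auto

lemma SUP_KI_mono:
  "(\<And>y. W y \<le> V y) \<Longrightarrow> (SUP x. KI S \<phi> W x) \<le> (SUP x. KI S \<phi> V x)"
  by (intro SUP_mono) (auto intro: KI_mono)

lemma tendsto0_le_ennreal:
  fixes f g :: "'a \<Rightarrow> ennreal"
  assumes "(g \<longlongrightarrow> 0) F" "eventually (\<lambda>r. f r \<le> g r) F"
  shows "(f \<longlongrightarrow> 0) F"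
  by (rule tendsto_sandwich[of "\<lambda>_. 0" f F g 0]) (use assms in auto)

lemma kato_mono:
  fixes V W :: "real^'n \<Rightarrow> ennreal"
  assumes "kato_class V" "W \<in> borel_measurable lebesgue" "\<And>y. W y \<le> V y"
  shows "kato_class W"
proof (cases "2 \<le> CARD('n)")
  case True
  then have "((\<lambda>r. SUP x. KI (\<lambda>x. ball x r) gk V x) \<longlongrightarrow> 0) (at_right 0)"
    using assms(1) by (simp add: kato_alt)
  then have "((\<lambda>r. SUP x. KI (\<lambda>x. ball x r) gk W x) \<longlongrightarrow> 0) (at_right 0)"
    by (rule tendsto0_le_ennreal) (auto intro!: always_eventually SUP_KI_mono assms(3))
  then show ?thesis using True assms(2) by (simp add: kato_alt)
next
  case False
  then have "(SUP x. KI (\<lambda>x. cball x 1) (\<lambda>_. 1) V x) < \<infinity>"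
    using assms(1) by (simp add: kato_alt)
  moreover have "(SUP x. KI (\<lambda>x. cball x 1) (\<lambda>_. 1) W x) \<le> (SUP x. KI (\<lambda>x. cball x 1) (\<lambda>_. 1) V x)"
    by (rule SUP_KI_mono) (rule assms(3))
  ultimately show ?thesis using False assms(2) by (simp add: kato_alt)
qed

lemma KI_add:
  fixes V W \<phi> :: "real^'n \<Rightarrow> ennreal"
  assumes "V \<in> borel_measurable lebesgue" "W \<in> borel_measurable lebesgue" "\<phi> \<in> borel_measurable borel"
    "S x \<in> sets borel"
  shows "KI S \<phi> (\<lambda>y. V y + W y) x = KI S \<phi> V x + KI S \<phi> W x"
  unfolding KI_def
  by (subst nn_integral_add[symmetric])
     (auto intro!: KI_meas assms nn_integral_cong simp: distrib_left)

lemma SUP_add_le_ennreal: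
  fixes f g :: "'a \<Rightarrow> ennreal"
  shows "(SUP x. f x + g x) \<le> (SUP x. f x) + (SUP x. g x)"
  by (rule SUP_least) (intro add_mono SUP_upper, auto)

lemma kato_add:
  fixes V W :: "real^'n \<Rightarrow> ennreal"
  assumes V: "kato_class V" and W: "kato_class W"
  shows "kato_class (\<lambda>y. V y + W y)"
proof -
  have Vm: "V \<in> borel_measurable lebesgue" and Wm: "W \<in> borel_measurable lebesgue"
    using V W by (auto simp: kato_alt)
  have m: "(\<lambda>y. V y + W y) \<in> borel_measurable lebesgue" using Vm Wm by measurable
  have le: "(SUP x. KI S \<phi> (\<lambda>y. V y + W y) x) \<le> (SUP x. KI S \<phi> V x) + (SUP x. KI S \<phi> W x)"
    if "\<phi> \<in> borel_measurable borel" "\<And>x. S x \<in> sets borel" for S \<phi>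
    using that by (subst KI_add[OF Vm Wm]) (auto intro: SUP_add_le_ennreal)
  show ?thesis
  proof (cases "2 \<le> CARD('n)")
    case True
    have tV: "((\<lambda>r. SUP x. KI (\<lambda>x. ball x r) gk V x) \<longlongrightarrow> 0) (at_right 0)"
      using V True by (simp add: kato_alt)
    have tW: "((\<lambda>r. SUP x. KI (\<lambda>x. ball x r) gk W x) \<longlongrightarrow> 0) (at_right 0)"
      using W True by (simp add: kato_alt)
    have "((\<lambda>r. (SUP x. KI (\<lambda>x. ball x r) gk V x) + (SUP x. KI (\<lambda>x. ball x r) gk W x)) \<longlongrightarrow> 0 + 0) (at_right 0)"
      by (rule tendsto_add[OF tV tW])
    then have t: "((\<lambda>r. (SUP x. KI (\<lambda>x. ball x r) gk V x) + (SUP x. KI (\<lambda>x. ball x r) gk W x)) \<longlongrightarrow> 0) (at_right 0)"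
      by simp
    have "((\<lambda>r. SUP x. KI (\<lambda>x. ball x r) gk (\<lambda>y. V y + W y) x) \<longlongrightarrow> 0) (at_right 0)"
    proof (rule tendsto0_le_ennreal[OF t always_eventually], rule allI)
      fix r :: real
      show "(SUP x. KI (\<lambda>x. ball x r) gk (\<lambda>y. V y + W y) x) \<le> (SUP x. KI (\<lambda>x. ball x r) gk V x) + (SUP x. KI (\<lambda>x. ball x r) gk W x)"
        by (rule le) auto
    qed
    then show ?thesis using True m by (simp add: kato_alt)
  next
    case False
    then have "(SUP x. KI (\<lambda>x. cball x 1) (\<lambda>_. 1) V x) < \<infinity>" "(SUP x. KI (\<lambda>x. cball x 1) (\<lambda>_. 1) W x) < \<infinity>"
      using V W by (auto simp: kato_alt)
    then have "(SUP x. KI (\<lambda>x. cball x 1) (\<lambda>_. 1) V x) + (SUP x. KI (\<lambda>x. cball x 1) (\<lambda>_. 1) W x) < \<infinity>"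
      by (simp add: ennreal_add_less_top)
    then have "(SUP x. KI (\<lambda>x. cball x 1) (\<lambda>_. 1) (\<lambda>y. V y + W y) x) < \<infinity>"
      by (rule le_less_trans[rotated]) (rule le, auto)
    then show ?thesis using False m by (simp add: kato_alt)
  qed
qed

lemma kato_zero: "kato_class (\<lambda>_::real^'n. 0)"
  by (simp add: kato_alt KI_def)

lemma kato_sum:
  fixes f :: "'q \<Rightarrow> real^'n \<Rightarrow> ennreal"
  assumes "finite F" "\<And>q. q \<in> F \<Longrightarrow> kato_class (f q)"
  shows "kato_class (\<lambda>y. \<Sum>q\<in>F. f q y)"
  using assms by (induction F rule: finite_induct) (auto intro: kato_zero kato_add)


lemma KI_cmult:
  fixes W \<phi> :: "real^'n \<Rightarrow> ennreal"
  assumes "W \<in> borel_measurable lebesgue" "\<phi> \<in> borel_measurable borel" "S x \<in> sets borel"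
  shows "KI S \<phi> (\<lambda>y. k * W y) x = k * KI S \<phi> W x"
proof -
  have m: "(\<lambda>y. indicator (S x) y * \<phi> (x - y) * W y) \<in> borel_measurable lebesgue"
    by (rule KI_meas) (rule assms)+
  show ?thesis
    unfolding KI_def nn_integral_cmult[OF m, symmetric]
    by (intro nn_integral_cong) (simp add: ac_simps)
qed

lemma KI_const_bound:
  fixes U \<phi> :: "real^'n \<Rightarrow> ennreal"
  assumes U: "U \<in> borel_measurable lebesgue" and \<phi>: "\<phi> \<in> borel_measurable borel"
    and S: "\<And>x. S x \<in> sets borel" and Sa: "\<And>x a z. (a + z \<in> S x) = (z \<in> S (x - a))"
    and inS: "\<And>y. y \<in> S x \<Longrightarrow> y - (x - x0) \<in> cball x0 1"
    and K: "K \<ge> 0" and c: "c > 0" and Uc: "\<And>y. y \<in> cball x0 1 \<Longrightarrow> ennreal c \<le> U y"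
  shows "KI S \<phi> (\<lambda>_. ennreal K) x \<le> ennreal (K / c) * KI S \<phi> U x0"
proof -
  have pt: "indicator (S x) y * \<phi> (x - y) * ennreal K \<le> indicator (S x) y * \<phi> (x - y) * (ennreal (K / c) * U (y - (x - x0)))" for y
  proof (cases "y \<in> S x")
    case True
    have "ennreal K = ennreal (K / c) * ennreal c"
      using c K by (simp add: ennreal_mult[symmetric])
    also have "\<dots> \<le> ennreal (K / c) * U (y - (x - x0))"
      by (intro mult_left_mono Uc inS True) auto
    finally show ?thesis by (intro mult_left_mono) auto
  qed simp
  have "KI S \<phi> (\<lambda>_. ennreal K) x \<le> KI S \<phi> (\<lambda>y. ennreal (K / c) * U (y - (x - x0))) x"
    unfolding KI_def by (intro nn_integral_mono pt)
  also have "\<dots> = ennreal (K / c) * KI S \<phi> (\<lambda>y. U (y - (x - x0))) x"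
    by (rule KI_cmult[OF measurable_shift_lebesgue'[OF U] \<phi> S])
  also have "KI S \<phi> (\<lambda>y. U (y - (x - x0))) x = KI S \<phi> U x0"
    proof -
    have "KI S \<phi> (\<lambda>y. U (y - (x - x0))) x = KI S \<phi> U (x - (x - x0))"
      by (rule KI_shift) (auto simp: Sa intro: U \<phi> S)
    then show ?thesis by simp
  qed
  finally show ?thesis .
qed

lemma kato_const:
  fixes U :: "real^'n \<Rightarrow> ennreal"
  assumes U: "kato_class U" and K: "K \<ge> 0" and c: "c > 0"
    and Uc: "\<And>y. y \<in> cball x0 1 \<Longrightarrow> ennreal c \<le> U y"
  shows "kato_class (\<lambda>_::real^'n. ennreal K)"
proof -
  have Um: "U \<in> borel_measurable lebesgue" using U by (simp add: kato_alt)
  show ?thesis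
  proof (cases "2 \<le> CARD('n)")
    case True
    have tU: "((\<lambda>r. SUP x. KI (\<lambda>x. ball x r) gk U x) \<longlongrightarrow> 0) (at_right 0)"
      using U True by (simp add: kato_alt)
    have "((\<lambda>r. ennreal (K / c) * (SUP x. KI (\<lambda>x. ball x r) gk U x)) \<longlongrightarrow> ennreal (K / c) * 0) (at_right 0)"
      by (rule ennreal_tendsto_cmult[OF _ tU]) simp
    then have t: "((\<lambda>r. ennreal (K / c) * (SUP x. KI (\<lambda>x. ball x r) gk U x)) \<longlongrightarrow> 0) (at_right 0)"
      by simp
    have ev: "eventually (\<lambda>r. r < 1) (at_right (0::real))"
      by (auto simp: eventually_at_right[OF zero_less_one] intro!: exI[of _ 1])
    have bound: "KI (\<lambda>x. ball x r) gk (\<lambda>_::real^'n. ennreal K) x \<le> ennreal (K / c) * (SUP x. KI (\<lambda>x. ball x r) gk U x)"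
      if r: "r < 1" for r and x :: "real^'n"
    proof -
      have "KI (\<lambda>x. ball x r) gk (\<lambda>_::real^'n. ennreal K) x \<le> ennreal (K / c) * KI (\<lambda>x. ball x r) gk U x0"
        by (rule KI_const_bound[OF Um gk_meas, where c=c])
           (use r K c Uc in \<open>auto simp: dist_norm algebra_simps\<close>)
      also have "\<dots> \<le> ennreal (K / c) * (SUP x. KI (\<lambda>x. ball x r) gk U x)"
        by (intro mult_left_mono SUP_upper) auto
      finally show ?thesis .
    qed
    have "((\<lambda>r. SUP x. KI (\<lambda>x. ball x r) gk (\<lambda>_::real^'n. ennreal K) x) \<longlongrightarrow> 0) (at_right 0)"
      by (rule tendsto0_le_ennreal[OF t eventually_mono[OF ev]]) (intro SUP_least bound)
    then show ?thesis using True by (simp add: kato_alt)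
  next
    case False
    have "(SUP x. KI (\<lambda>x. cball x 1) (\<lambda>_. 1) U x) < \<infinity>"
      using U False by (simp add: kato_alt)
    then have lt: "ennreal (K / c) * (SUP x. KI (\<lambda>x. cball x 1) (\<lambda>_. 1) U x) < \<infinity>"
      by (simp add: ennreal_mult_less_top)
    have "(SUP x. KI (\<lambda>x. cball x 1) (\<lambda>_. 1) (\<lambda>_::real^'n. ennreal K) x) \<le> ennreal (K / c) * (SUP x. KI (\<lambda>x. cball x 1) (\<lambda>_. 1) U x)"
    proof (rule SUP_least)
      fix x :: "real^'n"
      have "KI (\<lambda>x. cball x 1) (\<lambda>_. 1) (\<lambda>_::real^'n. ennreal K) x \<le> ennreal (K / c) * KI (\<lambda>x. cball x 1) (\<lambda>_. 1) U x0"
        by (rule KI_const_bound[OF Um, where c=c]) (use K c Uc in \<open>auto simp: dist_norm algebra_simps\<close>)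
      also have "\<dots> \<le> ennreal (K / c) * (SUP x. KI (\<lambda>x. cball x 1) (\<lambda>_. 1) U x)"
        by (intro mult_left_mono SUP_upper) auto
      finally show "KI (\<lambda>x. cball x 1) (\<lambda>_. 1) (\<lambda>_::real^'n. ennreal K) x \<le> ennreal (K / c) * (SUP x. KI (\<lambda>x. cball x 1) (\<lambda>_. 1) U x)" .
    qed
    then show ?thesis using False lt by (simp add: kato_alt)
  qed
qed



lemma lattice_pt_nth: "lattice_pt q $ i = real_of_int (q $ i)"
  by (simp add: lattice_pt_def)

lemma lattice_comp_le: "\<bar>real_of_int (q $ i)\<bar> \<le> norm (lattice_pt q)"
  using component_le_norm_cart[of "lattice_pt q" i] by (simp add: lattice_pt_nth)

lemma finite_lattice_ball: "finite {q :: int^'n. norm (lattice_pt q) \<le> T}"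
proof -
  define B where "B = {-\<lceil>T\<rceil>..\<lceil>T\<rceil>}"
  have "{q :: int^'n. norm (lattice_pt q) \<le> T} \<subseteq> vec_lambda ` (PiE UNIV (\<lambda>_. B))"
  proof
    fix q :: "int^'n" assume "q \<in> {q. norm (lattice_pt q) \<le> T}"
    then have n: "norm (lattice_pt q) \<le> T" by simp
    have "vec_nth q \<in> PiE UNIV (\<lambda>_. B)"
    proof (unfold PiE_UNIV_domain, rule Pi_I)
      fix i
      have "\<bar>real_of_int (q $ i)\<bar> \<le> T" using lattice_comp_le[of q i] n by linarith
      then have "\<bar>q $ i\<bar> \<le> \<lceil>T\<rceil>" by linarith
      then show "q $ i \<in> B" unfolding B_def by auto
    qed
    then show "q \<in> vec_lambda ` (PiE UNIV (\<lambda>_. B))"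
      by (intro image_eqI[of _ _ "vec_nth q"]) (simp_all add: vec_nth_inverse)
  qed
  moreover have "finite (PiE (UNIV::'n set) (\<lambda>_. B))"
    by (intro finite_PiE) (auto simp: B_def)
  ultimately show ?thesis by (meson finite_imageI finite_subset)
qed

lemma summable_int_powr:
  assumes "\<beta> > 1"
  shows "(\<lambda>k::int. (1 + \<bar>real_of_int k\<bar>) powr (-\<beta>)) summable_on UNIV"
proof -
  have "summable (\<lambda>n::nat. real n powr (-\<beta>))"
    using assms by (simp add: summable_real_powr_iff)
  then have "summable (\<lambda>n::nat. real (Suc n) powr (-\<beta>))"
    by (rule summable_Suc_iff[THEN iffD2])
  then have s: "summable (\<lambda>n::nat. (1 + real n) powr (-\<beta>))"
    unfolding of_nat_Suc by simp
  then have sn: "(\<lambda>n::nat. (1 + real n) powr (-\<beta>)) summable_on UNIV"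
    by (rule summable_nonneg_imp_summable_on) simp
  have A: "(\<lambda>k::int. (1 + \<bar>real_of_int k\<bar>) powr (-\<beta>)) summable_on range int"
    using sn by (subst summable_on_reindex) (auto simp: o_def)
  have inj2: "inj (\<lambda>n::nat. - int n)" by (auto simp: inj_def)
  have B: "(\<lambda>k::int. (1 + \<bar>real_of_int k\<bar>) powr (-\<beta>)) summable_on range (\<lambda>n::nat. - int n)"
    using sn by (subst summable_on_reindex[OF inj2]) (auto simp: o_def)
  have k: "k \<in> range int \<union> range (\<lambda>n::nat. - int n)" for k :: int
  proof (cases "k \<ge> 0")
    case True then show ?thesis by (auto intro!: image_eqI[of _ _ "nat k"])
  next
    case False then show ?thesis by (auto intro!: image_eqI[of _ _ "nat (-k)"])
  qed
  have U: "range int \<union> range (\<lambda>n::nat. - int n) = UNIV" using k by blast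
  show ?thesis using summable_on_union[OF A B] unfolding U .
qed

lemma bij_vec_nth: "bij_betw (vec_nth :: 'a^'n \<Rightarrow> 'n \<Rightarrow> 'a) UNIV UNIV"
  by (rule bij_betwI[of _ _ _ vec_lambda]) (auto simp: vec_lambda_inverse vec_nth_inverse)

lemma summable_lattice_powr:
  assumes \<alpha>: "\<alpha> > real CARD('n)"
  shows "(\<lambda>q::int^'n. (1 + norm (lattice_pt q)) powr (-\<alpha>)) summable_on UNIV"
proof -
  define d where "d = real CARD('n)"
  have d: "d > 0" by (simp add: d_def)
  define \<beta> where "\<beta> = \<alpha> / d"
  have \<beta>: "\<beta> > 1" using \<alpha> d by (simp add: \<beta>_def d_def)
  define f where "f k = (1 + \<bar>real_of_int k\<bar>) powr (-\<beta>)" for k :: int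
  have fs: "f summable_on UNIV" unfolding f_def by (rule summable_int_powr[OF \<beta>])
  have fa: "Infinite_Set_Sum.abs_summable_on f UNIV"
    using fs abs_summable_equivalent[of f UNIV] by (simp add: f_def[abs_def])
  have "Infinite_Set_Sum.abs_summable_on (\<lambda>g. \<Prod>i\<in>UNIV. (\<lambda>_::'n. f) i (g i)) (PiE UNIV (\<lambda>_. UNIV))"
    by (rule abs_summable_on_prod_PiE) (use fa in auto)
  then have "(\<lambda>g::'n \<Rightarrow> int. \<Prod>i\<in>UNIV. f (g i)) summable_on UNIV"
    using abs_summable_equivalent[of "\<lambda>g::'n \<Rightarrow> int. \<Prod>i\<in>UNIV. f (g i)" UNIV]
    by (simp add: f_def abs_summable_on_def[symmetric] prod_nonneg)
  then have ws: "(\<lambda>q::int^'n. \<Prod>i\<in>UNIV. f (q $ i)) summable_on UNIV"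
    using summable_on_reindex_bij_betw[OF bij_vec_nth[where 'a=int and 'n='n], of "\<lambda>g. \<Prod>i\<in>UNIV. f (g i)"] by simp
  show ?thesis
  proof (rule summable_on_comparison_test[OF ws])
    fix q :: "int^'n"
    show "0 \<le> (1 + norm (lattice_pt q)) powr (-\<alpha>)" by simp
    have pos: "0 < 1 + norm (lattice_pt q)" by (simp add: add_pos_nonneg)
    have "(\<Prod>i\<in>UNIV. (1 + \<bar>real_of_int (q $ i)\<bar>) powr \<beta>) \<le> (\<Prod>i\<in>(UNIV::'n set). (1 + norm (lattice_pt q)) powr \<beta>)"
      by (intro prod_mono conjI powr_mono2) (use \<beta> lattice_comp_le in auto)
    also have "\<dots> = ((1 + norm (lattice_pt q)) powr \<beta>) ^ CARD('n)" by simp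
    also have "\<dots> = (1 + norm (lattice_pt q)) powr \<alpha>"
      using pos d by (simp add: powr_realpow[symmetric] powr_powr \<beta>_def d_def)
    finally have le: "(\<Prod>i\<in>UNIV. (1 + \<bar>real_of_int (q $ i)\<bar>) powr \<beta>) \<le> (1 + norm (lattice_pt q)) powr \<alpha>" .
    have ppos: "0 < (\<Prod>i\<in>(UNIV::'n set). (1 + \<bar>real_of_int (q $ i)\<bar>) powr \<beta>)"
      by (intro prod_pos) (simp add: add_pos_nonneg)
    have "(1 + norm (lattice_pt q)) powr (-\<alpha>) = inverse ((1 + norm (lattice_pt q)) powr \<alpha>)"
      by (simp add: powr_minus)
    also have "\<dots> \<le> inverse (\<Prod>i\<in>UNIV. (1 + \<bar>real_of_int (q $ i)\<bar>) powr \<beta>)"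
      by (rule le_imp_inverse_le[OF le ppos])
    also have "\<dots> = (\<Prod>i\<in>UNIV. f (q $ i))"
      using prod_inversef[of "\<lambda>i. (1 + \<bar>real_of_int (q $ i)\<bar>) powr \<beta>" UNIV] by (simp add: f_def powr_minus o_def)
    finally show "(1 + norm (lattice_pt q)) powr (-\<alpha>) \<le> (\<Prod>i\<in>UNIV. f (q $ i))" .
  qed
qed



lemma Z_facts:
  fixes X :: "'w \<Rightarrow> real^'n"
  assumes P: "prob_space M"
    and D: "distributed M lborel X (\<lambda>x. ennreal (exp (- (norm (x::real^'n) powr \<theta>)) / Z))"
  shows "Z > 0" "(\<integral>\<^sup>+x. ennreal (exp (- (norm (x::real^'n) powr \<theta>))) \<partial>lborel) = ennreal Z"
proof -
  interpret prob_space M by (rule P)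
  have m: "(\<lambda>x. ennreal (exp (- (norm (x::real^'n) powr \<theta>)) / Z)) \<in> borel_measurable lborel"
    by measurable
  have "emeasure M (X -` UNIV \<inter> space M) = (\<integral>\<^sup>+x. ennreal (exp (- (norm (x::real^'n) powr \<theta>)) / Z) * indicator UNIV x \<partial>lborel)"
    by (rule distributed_emeasure[OF D]) simp
  then have one: "(\<integral>\<^sup>+x. ennreal (exp (- (norm (x::real^'n) powr \<theta>)) / Z) \<partial>lborel) = 1"
    by (simp add: emeasure_space_1)
  show Zpos: "Z > 0"
  proof (rule ccontr)
    assume "\<not> Z > 0"
    then have "\<And>x. exp (- (norm (x::real^'n) powr \<theta>)) / Z \<le> 0"
      by (simp add: divide_nonneg_nonpos)
    then have "\<And>x. ennreal (exp (- (norm (x::real^'n) powr \<theta>)) / Z) = 0"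
      by (simp add: ennreal_eq_0_iff)
    then have "(\<integral>\<^sup>+x. ennreal (exp (- (norm (x::real^'n) powr \<theta>)) / Z) \<partial>lborel) = 0"
      by simp
    with one show False by simp
  qed
  have "(\<integral>\<^sup>+x. ennreal (exp (- (norm (x::real^'n) powr \<theta>))) \<partial>lborel) = (\<integral>\<^sup>+x. ennreal Z * ennreal (exp (- (norm (x::real^'n) powr \<theta>)) / Z) \<partial>lborel)"
    using Zpos by (intro nn_integral_cong) (simp add: ennreal_mult[symmetric])
  also have "\<dots> = ennreal Z * 1"
    by (subst nn_integral_cmult[OF m]) (simp add: one)
  finally show "(\<integral>\<^sup>+x. ennreal (exp (- (norm (x::real^'n) powr \<theta>))) \<partial>lborel) = ennreal Z" by simp
qed

lemma half_exp_integral_finite: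
  assumes \<theta>: "\<theta> > 0" and fin: "(\<integral>\<^sup>+x. ennreal (exp (- (norm (x::real^'n) powr \<theta>))) \<partial>lborel) < \<infinity>"
  shows "(\<integral>\<^sup>+x. ennreal (exp (- (norm (x::real^'n) powr \<theta>) / 2)) \<partial>lborel) < \<infinity>"
proof -
  define c :: real where "c = (1/2) powr (1/\<theta>)"
  have c: "c > 0" by (simp add: c_def)
  have c\<theta>: "c powr \<theta> = 1/2" using \<theta> by (simp add: c_def powr_powr)
  have eq: "lborel = density (distr lborel borel (\<lambda>x::real^'n. 0 + c *\<^sub>R x)) (\<lambda>_. \<bar>c\<bar>^DIM(real^'n))"
    using c by (intro lborel_affine) simp
  have m[measurable]: "(\<lambda>x::real^'n. ennreal (exp (- (norm (x::real^'n) powr \<theta>)))) \<in> borel_measurable borel"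
    by measurable
  have "(\<integral>\<^sup>+x. ennreal (exp (- (norm (x::real^'n) powr \<theta>))) \<partial>lborel)
      = (\<integral>\<^sup>+x. ennreal (exp (- (norm (x::real^'n) powr \<theta>))) \<partial>density (distr lborel borel (\<lambda>x::real^'n. 0 + c *\<^sub>R x)) (\<lambda>_. \<bar>c\<bar>^DIM(real^'n)))"
    by (subst eq[symmetric]) (rule refl)
  also have "\<dots> = (\<integral>\<^sup>+x. ennreal (\<bar>c\<bar>^DIM(real^'n)) * ennreal (exp (- (norm (c *\<^sub>R (x::real^'n)) powr \<theta>))) \<partial>lborel)"
    by (subst nn_integral_density) (auto simp: nn_integral_distr)
  also have "\<dots> = ennreal (\<bar>c\<bar>^DIM(real^'n)) * (\<integral>\<^sup>+x. ennreal (exp (- (norm (x::real^'n) powr \<theta>) / 2)) \<partial>lborel)"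
  proof -
    have e: "(\<bar>c\<bar> * norm x) powr \<theta> = norm x powr \<theta> / 2" for x :: "real^'n"
      using c by (simp add: powr_mult c\<theta>)
    show ?thesis
      by (subst nn_integral_cmult[symmetric]) (auto intro!: nn_integral_cong simp: e)
  qed
  finally have "ennreal (\<bar>c\<bar>^DIM(real^'n)) * (\<integral>\<^sup>+x. ennreal (exp (- (norm (x::real^'n) powr \<theta>) / 2)) \<partial>lborel) < \<infinity>"
    using fin by simp
  then show ?thesis using c by (auto simp: ennreal_mult_less_top)
qed

lemma tail_bound:
  fixes X :: "'w \<Rightarrow> real^'n"
  assumes P: "prob_space M"
    and D: "distributed M lborel X (\<lambda>x. ennreal (exp (- (norm (x::real^'n) powr \<theta>)) / Z))"
    and \<theta>: "\<theta> > 0" and Z: "Z > 0" and s: "s \<ge> 0"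
  shows "emeasure M {\<omega>\<in>space M. s < norm (X \<omega>)} \<le>
     ennreal (exp (- (s powr \<theta>) / 2) / Z) * (\<integral>\<^sup>+x. ennreal (exp (- (norm (x::real^'n) powr \<theta>) / 2)) \<partial>lborel)"
proof -
  have A: "{x::real^'n. s < norm x} \<in> sets borel" by measurable
  have "emeasure M {\<omega>\<in>space M. s < norm (X \<omega>)} = emeasure M (X -` {x. s < norm x} \<inter> space M)"
    by (intro arg_cong[where f="emeasure M"]) auto
  also have "\<dots> = (\<integral>\<^sup>+x. ennreal (exp (- (norm (x::real^'n) powr \<theta>)) / Z) * indicator {x. s < norm x} x \<partial>lborel)"
    by (rule distributed_emeasure[OF D]) (use A in simp)
  also have "\<dots> \<le> (\<integral>\<^sup>+x. ennreal (exp (- (s powr \<theta>) / 2) / Z) * ennreal (exp (- (norm (x::real^'n) powr \<theta>) / 2)) \<partial>lborel)"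
  proof (intro nn_integral_mono)
    fix x :: "real^'n"
    show "ennreal (exp (- (norm (x::real^'n) powr \<theta>)) / Z) * indicator {x. s < norm x} x \<le> ennreal (exp (- (s powr \<theta>) / 2) / Z) * ennreal (exp (- (norm (x::real^'n) powr \<theta>) / 2))"
    proof (cases "s < norm x")
      case True
      have "s powr \<theta> \<le> norm (x::real^'n) powr \<theta>" using True s \<theta> by (intro powr_mono2) auto
      then have "exp (- (norm (x::real^'n) powr \<theta>)) \<le> exp (- (s powr \<theta>) / 2) * exp (- (norm (x::real^'n) powr \<theta>) / 2)"
        by (simp add: exp_add[symmetric])
      then have "exp (- (norm (x::real^'n) powr \<theta>)) / Z \<le> exp (- (s powr \<theta>) / 2) / Z * exp (- (norm (x::real^'n) powr \<theta>) / 2)"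
        using Z by (simp add: divide_right_mono)
      then show ?thesis using True Z by (simp add: ennreal_mult[symmetric] ennreal_leI)
    qed simp
  qed
  also have "\<dots> = ennreal (exp (- (s powr \<theta>) / 2) / Z) * (\<integral>\<^sup>+x. ennreal (exp (- (norm (x::real^'n) powr \<theta>) / 2)) \<partial>lborel)"
    by (rule nn_integral_cmult) measurable
  finally show ?thesis .
qed

lemma exp_poly_bound:
  assumes \<theta>: "\<theta> > 0"
  shows "\<exists>C>0. \<forall>t\<ge>(0::real). exp (- ((t/2) powr \<theta>) / 2) \<le> C * (1 + t) powr (-\<alpha>)"
proof -
  have "((\<lambda>t::real. (1+t) powr \<alpha> * exp (- ((t/2) powr \<theta> / 2))) \<longlongrightarrow> 0) at_top"
    using \<theta> by real_asymp
  then have "eventually (\<lambda>t. (1+t) powr \<alpha> * exp (- ((t/2) powr \<theta> / 2)) < 1) at_top"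
    by (rule order_tendstoD) simp
  then obtain T :: real where T: "\<And>t. t \<ge> T \<Longrightarrow> (1+t) powr \<alpha> * exp (- ((t/2) powr \<theta> / 2)) < 1"
    by (auto simp: eventually_at_top_linorder)
  define C where "C = max 1 ((1 + max T 0) powr \<alpha>)"
  have C: "C > 0" by (simp add: C_def)
  have "exp (- ((t/2) powr \<theta>) / 2) \<le> C * (1 + t) powr (-\<alpha>)" if t: "t \<ge> 0" for t :: real
  proof -
    have pos: "(1 + t) powr \<alpha> > 0" using t by simp
    have "(1+t) powr \<alpha> * exp (- ((t/2) powr \<theta>) / 2) \<le> C"
    proof (cases "t \<ge> T")
      case True then show ?thesis using T[of t] by (simp add: C_def)
    next
      case False
      have "exp (- ((t/2) powr \<theta>) / 2) \<le> 1" by simp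
      then have "(1+t) powr \<alpha> * exp (- ((t/2) powr \<theta>) / 2) \<le> (1+t) powr \<alpha>"
        using pos by (simp add: mult_left_le)
      also have "\<dots> \<le> C"
      proof (cases "\<alpha> \<ge> 0")
        case True
        then have "(1+t) powr \<alpha> \<le> (1 + max T 0) powr \<alpha>"
          using False t by (intro powr_mono2) auto
        then show ?thesis by (simp add: C_def)
      next
        case False
        then have "(1+t) powr \<alpha> \<le> 1" using powr_mono[of \<alpha> 0 "1+t"] t by simp
        then show ?thesis by (simp add: C_def)
      qed
      finally show ?thesis .
    qed
    then show ?thesis using pos
      by (simp add: powr_minus field_simps)
  qed
  then show ?thesis using C by blast
qed



lemma infsum_nat_ennreal: "infsum (g::nat \<Rightarrow> ennreal) UNIV = suminf g"
proof -
  have "infsum g UNIV = (SUP F\<in>{F. finite F \<and> F \<subseteq> UNIV}. sum g F)"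
    by (rule nonneg_infsum_complete) simp
  also have "\<dots> = (SUP n. sum g {..<n})"
  proof (rule antisym)
    show "(SUP F\<in>{F. finite F \<and> F \<subseteq> UNIV}. sum g F) \<le> (SUP n. sum g {..<n})"
    proof (rule SUP_least)
      fix F assume "F \<in> {F. finite F \<and> F \<subseteq> (UNIV::nat set)}"
      then obtain k where "F \<subseteq> {..<k}" using finite_nat_bounded by auto
      then have "sum g F \<le> sum g {..<k}" by (intro sum_mono2) auto
      also have "\<dots> \<le> (SUP n. sum g {..<n})" by (rule SUP_upper) simp
      finally show "sum g F \<le> (SUP n. sum g {..<n})" .
    qed
    show "(SUP n. sum g {..<n}) \<le> (SUP F\<in>{F. finite F \<and> F \<subseteq> UNIV}. sum g F)"
      by (rule SUP_least) (rule SUP_upper, simp)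
  qed
  also have "\<dots> = suminf g" by (rule suminf_eq_SUP[symmetric])
  finally show ?thesis .
qed

lemma infinite_int_vec: "infinite (UNIV :: (int^'n) set)"
proof
  assume f: "finite (UNIV :: (int^'n) set)"
  have "inj (\<lambda>k::int. (vec k :: int^'n))" by (auto simp: inj_def vec_eq_iff)
  then have "finite (UNIV :: int set)"
    using finite_imageD[OF finite_subset[OF subset_UNIV f]] by blast
  then show False by simp
qed

definition enum_q :: "nat \<Rightarrow> int^'n" where "enum_q = from_nat_into UNIV"

lemma bij_enum_q: "bij_betw (enum_q :: nat \<Rightarrow> int^'n) UNIV UNIV"
  unfolding enum_q_def by (rule bij_betw_from_nat_into) (auto simp: infinite_int_vec)

lemma infsum_q_suminf: "infsum (f :: int^'n \<Rightarrow> ennreal) UNIV = (\<Sum>n. f (enum_q n))"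
  by (subst infsum_reindex_bij_betw[OF bij_enum_q, symmetric]) (simp add: infsum_nat_ennreal)

lemma infsum_ennreal_real:
  fixes w :: "'a \<Rightarrow> real"
  assumes "w summable_on A" "\<And>q. q \<in> A \<Longrightarrow> w q \<ge> 0"
  shows "infsum (\<lambda>q. ennreal (w q)) A = ennreal (infsum w A)"
proof -
  have "infsum (\<lambda>q. ennreal (w q)) A = (SUP F\<in>{F. finite F \<and> F \<subseteq> A}. sum (\<lambda>q. ennreal (w q)) F)"
    by (rule nonneg_infsum_complete) simp
  also have "\<dots> = (SUP F\<in>{F. finite F \<and> F \<subseteq> A}. ennreal (sum w F))"
    using assms(2) by (intro SUP_cong refl sum_ennreal) auto
  also have "\<dots> = ennreal (infsum w A)"
    by (rule infsum_nonneg_is_SUPREMUM_ennreal[symmetric]) (use assms in auto)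
  finally show ?thesis .
qed



lemma bad_finite_AE:
  fixes \<xi> :: "int^'n \<Rightarrow> 'w \<Rightarrow> real^'n"
  assumes P: "prob_space M"
    and D: "\<And>q. distributed M lborel (\<xi> q) (\<lambda>x. ennreal (exp (- (norm x powr \<theta>)) / Z))"
    and \<theta>: "\<theta> > 0" and \<alpha>: "\<alpha> > real CARD('n)"
  shows "AE \<omega> in M. finite {q. norm (lattice_pt q) / 2 < norm (\<xi> q \<omega>)}"
proof -
  interpret prob_space M by (rule P)
  have Z: "Z > 0" and IZ: "(\<integral>\<^sup>+x. ennreal (exp (- (norm (x::real^'n) powr \<theta>))) \<partial>lborel) = ennreal Z"
    using Z_facts[OF P D[of 0]] by auto
  have I2: "(\<integral>\<^sup>+x. ennreal (exp (- (norm (x::real^'n) powr \<theta>) / 2)) \<partial>lborel) < \<infinity>"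
    by (rule half_exp_integral_finite[OF \<theta>]) (simp add: IZ)
  define I2r where "I2r = enn2real (\<integral>\<^sup>+x. ennreal (exp (- (norm (x::real^'n) powr \<theta>) / 2)) \<partial>lborel)"
  have I2eq: "(\<integral>\<^sup>+x. ennreal (exp (- (norm (x::real^'n) powr \<theta>) / 2)) \<partial>lborel) = ennreal I2r"
    using I2 unfolding I2r_def by (simp add: ennreal_enn2real less_top)
  have I2r: "I2r \<ge> 0" by (simp add: I2r_def)
  obtain C3 where C3: "C3 > 0" "\<And>t. t \<ge> 0 \<Longrightarrow> exp (- ((t/2) powr \<theta>) / 2) \<le> C3 * (1 + t) powr (-\<alpha>)"
    using exp_poly_bound[OF \<theta>, of \<alpha>] by auto
  define C2 where "C2 = C3 / Z * I2r"
  have C2: "C2 \<ge> 0" using C3 Z I2r by (simp add: C2_def)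
  define A where "A q = {\<omega>\<in>space M. norm (lattice_pt q) / 2 < norm (\<xi> q \<omega>)}" for q
  have \<xi>m: "\<xi> q \<in> borel_measurable M" for q
    using distributed_measurable[OF D[of q]] by simp
  have Am: "A q \<in> sets M" for q
    unfolding A_def using \<xi>m[of q] by measurable
  have bnd: "measure M (A q) \<le> C2 * (1 + norm (lattice_pt q)) powr (-\<alpha>)" for q
  proof -
    define t where "t = norm (lattice_pt q)"
    have t: "t \<ge> 0" by (simp add: t_def)
    have "emeasure M (A q) \<le> ennreal (exp (- ((t/2) powr \<theta>) / 2) / Z) * ennreal I2r"
      unfolding A_def t_def[symmetric] I2eq[symmetric]
      by (rule tail_bound[OF P D \<theta> Z]) (use t in simp)
    also have "\<dots> = ennreal (exp (- ((t/2) powr \<theta>) / 2) / Z * I2r)"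
      using I2r Z by (subst ennreal_mult[symmetric]) auto
    also have "\<dots> \<le> ennreal (C2 * (1 + t) powr (-\<alpha>))"
    proof (rule ennreal_leI)
      have "exp (- ((t/2) powr \<theta>) / 2) / Z * I2r \<le> C3 * (1 + t) powr (-\<alpha>) / Z * I2r"
        using C3(2)[OF t] Z I2r by (intro mult_right_mono divide_right_mono) auto
      then show "exp (- ((t/2) powr \<theta>) / 2) / Z * I2r \<le> C2 * (1 + t) powr (-\<alpha>)"
        by (simp add: C2_def field_simps)
    qed
    finally have "ennreal (measure M (A q)) \<le> ennreal (C2 * (1 + t) powr (-\<alpha>))"
      by (simp add: emeasure_eq_measure)
    then show ?thesis using C2 by (simp add: t_def ennreal_le_iff)
  qed
  have ws: "(\<lambda>q::int^'n. C2 * (1 + norm (lattice_pt q)) powr (-\<alpha>)) summable_on UNIV"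
    by (intro summable_on_cmult_right summable_lattice_powr[OF \<alpha>])
  have ms: "(\<lambda>q. measure M (A q)) summable_on UNIV"
    by (rule summable_on_comparison_test[OF ws]) (auto intro: bnd)
  have "(\<lambda>n. measure M (A (enum_q n))) summable_on UNIV"
    using summable_on_reindex_bij_betw[OF bij_enum_q, of "\<lambda>q. measure M (A q)"] ms by simp
  then have sm: "summable (\<lambda>n. measure M (A (enum_q n)))"
    by (rule summable_on_imp_summable)
  have "AE \<omega> in M. eventually (\<lambda>n. \<omega> \<in> space M - A (enum_q n)) sequentially"
    by (rule borel_cantelli_AE1) (auto simp: Am sm emeasure_eq_measure)
  then show ?thesis
  proof (rule AE_mp)
    show "AE \<omega> in M. eventually (\<lambda>n. \<omega> \<in> space M - A (enum_q n)) sequentially \<longrightarrow> finite {q. norm (lattice_pt q) / 2 < norm (\<xi> q \<omega>)}"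
    proof (rule AE_I2, intro impI)
    fix \<omega> assume \<omega>: "\<omega> \<in> space M" and ev: "eventually (\<lambda>n. \<omega> \<in> space M - A (enum_q n)) sequentially"
    then obtain N where N: "\<And>n. n \<ge> N \<Longrightarrow> \<omega> \<notin> A (enum_q n)"
      by (auto simp: eventually_sequentially)
    have "{q. norm (lattice_pt q) / 2 < norm (\<xi> q \<omega>)} \<subseteq> enum_q ` {..<N}"
    proof
      fix q assume q: "q \<in> {q. norm (lattice_pt q) / 2 < norm (\<xi> q \<omega>)}"
      obtain n where n: "q = enum_q n"
        using bij_enum_q unfolding bij_betw_def by (metis UNIV_I imageE)
      have "\<omega> \<in> A (enum_q n)" using q \<omega> n by (simp add: A_def)
      then have "n < N" using N by (meson not_le)
      then show "q \<in> enum_q ` {..<N}" using n by auto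
    qed
    then show "finite {q. norm (lattice_pt q) / 2 < norm (\<xi> q \<omega>)}"
      by (rule finite_subset) simp
    qed
  qed
qed



lemma u_bounds:
  fixes u :: "real^'n \<Rightarrow> real"
  assumes C0: "C0 > 0"
    and u_asymp: "((\<lambda>x. u x / (C0 * norm x powr (- \<alpha>))) \<longlongrightarrow> 1) at_infinity"
  shows "\<exists>b\<ge>1. \<forall>x. norm x \<ge> b \<longrightarrow> u x \<le> 2 * C0 * norm x powr (-\<alpha>) \<and> C0 / 2 * norm x powr (-\<alpha>) \<le> u x"
proof -
  have "eventually (\<lambda>x. dist (u x / (C0 * norm x powr (- \<alpha>))) 1 < 1/2) at_infinity"
    using tendstoD[OF u_asymp, of "1/2"] by simp
  then obtain b0 where b0: "\<And>x. norm x \<ge> b0 \<Longrightarrow> dist (u x / (C0 * norm x powr (- \<alpha>))) 1 < 1/2"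
    by (auto simp: eventually_at_infinity)
  define b where "b = max b0 1"
  have "u x \<le> 2 * C0 * norm x powr (-\<alpha>) \<and> C0 / 2 * norm x powr (-\<alpha>) \<le> u x" if x: "norm x \<ge> b" for x
  proof -
    have "norm x \<ge> 1" using x by (simp add: b_def)
    then have nx: "norm x > 0" by linarith
    define D where "D = C0 * norm x powr (- \<alpha>)"
    have D: "D > 0" using C0 nx by (simp add: D_def)
    have "\<bar>u x / D - 1\<bar> < 1/2" using b0[of x] x by (simp add: D_def dist_real_def b_def)
    then have "u x / D < 3/2" "1/2 < u x / D" by linarith+
    then have "u x < 3/2 * D" "1/2 * D < u x" using D by (simp_all add: divide_less_eq less_divide_eq)
    then show ?thesis using D by (simp add: D_def)
  qed
  moreover have "b \<ge> 1" by (simp add: b_def)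
  ultimately show ?thesis by blast
qed

lemma tail_pt:
  fixes u :: "real^'n \<Rightarrow> real" and y L X :: "real^'n"
  assumes b: "b \<ge> 1" and \<alpha>: "\<alpha> > 0" and C0: "C0 > 0"
    and ub: "\<And>x. norm x \<ge> b \<Longrightarrow> u x \<le> 2 * C0 * norm x powr (-\<alpha>)"
    and y: "norm y < R" and L: "\<not> norm L \<le> 4 * (R + b)" and X: "\<not> norm L / 2 < norm X"
  shows "u (y - (L + X)) \<le> 2 * C0 * 8 powr \<alpha> * (1 + norm L) powr (-\<alpha>)"
proof -
  define z where "z = y - (L + X)"
  have "L = (y - X) - z" by (simp add: z_def algebra_simps)
  then have "norm L \<le> norm (y - X) + norm z" using norm_triangle_ineq4 by metis
  also have "norm (y - X) \<le> norm y + norm X" by (rule norm_triangle_ineq4)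
  finally have tri: "norm L \<le> norm y + norm X + norm z" by simp
  have R: "R > 0" using y by (meson le_less_trans norm_ge_zero)
  have z1: "norm z > norm L / 2 - R" using tri y X by linarith
  have z2: "norm L > 4 * R + 4 * b" using L by (simp add: algebra_simps)
  have Lq: "norm L / 4 \<le> norm z" using z1 z2 b by linarith
  have Lb: "b \<le> norm L / 4" using z2 R by linarith
  have Lpos: "0 < norm L / 4" using Lb b by linarith
  have "u z \<le> 2 * C0 * norm z powr (-\<alpha>)" using ub[of z] Lq Lb by linarith
  also have "\<dots> \<le> 2 * C0 * (norm L / 4) powr (-\<alpha>)"
    using C0 \<alpha> Lq Lpos by (intro mult_left_mono powr_mono2') auto
  also have "(norm L / 4) powr (-\<alpha>) \<le> ((1 + norm L) / 8) powr (-\<alpha>)"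
    using \<alpha> Lb b by (intro powr_mono2') auto
  also have "((1 + norm L) / 8) powr (-\<alpha>) = (1 + norm L) powr (-\<alpha>) / 8 powr (-\<alpha>)"
    by (rule powr_divide)
  also have "8 powr (-\<alpha>) = inverse (8 powr \<alpha>)"
    by (rule powr_minus)
  also have "(1 + norm L) powr (-\<alpha>) / inverse (8 powr \<alpha>) = 8 powr \<alpha> * (1 + norm L) powr (-\<alpha>)"
    by (simp only: divide_inverse inverse_inverse_eq mult.commute)
  finally show ?thesis using C0 by (simp add: z_def mult_left_mono ac_simps)
qed



theorem lemma7p1:
  fixes u :: "real ^ 'n \<Rightarrow> real"
    and M :: "'w measure"
    and \<xi> :: "int ^ 'n \<Rightarrow> 'w \<Rightarrow> real ^ 'n"
    and C0 \<alpha> \<theta> :: real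
  assumes u_nonneg: "\<And>x. u x \<ge> 0"
    and u_kato: "kato_class (\<lambda>x. ennreal (u x))"
    and \<alpha>: "\<alpha> > real CARD('n)"
    and C0: "C0 > 0"
    and u_asymp: "((\<lambda>x. u x / (C0 * norm x powr (- \<alpha>))) \<longlongrightarrow> 1) at_infinity"
    and \<theta>: "\<theta> > 0"
    and P: "prob_space M"
    and indep: "prob_space.indep_vars M (\<lambda>_. borel) \<xi> UNIV"
    and distr: "\<And>q. distributed M lborel (\<xi> q)
                  (\<lambda>x. ennreal (exp (- (norm x powr \<theta>)) / Znorm \<theta> TYPE('n)))"
  shows "AE \<omega> in M. kato_class_loc (V_xi u \<xi> \<omega>)"
proof -
  have Um: "(\<lambda>x. ennreal (u x)) \<in> borel_measurable lebesgue" using u_kato by (simp add: kato_alt)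
  have \<alpha>0: "\<alpha> > 0" using \<alpha> by (metis of_nat_0_less_iff order.strict_trans zero_less_card_finite)
  obtain b where b: "b \<ge> 1" and bnd: "\<And>x. norm x \<ge> b \<Longrightarrow> u x \<le> 2 * C0 * norm x powr (-\<alpha>) \<and> C0 / 2 * norm x powr (-\<alpha>) \<le> u x"
    using u_bounds[OF C0 u_asymp] by blast
  obtain x0 :: "real^'n" where nx0: "norm x0 = b + 1"
    using vector_choose_size[of "b + 1"] b by auto
  define c where "c = C0 / 2 * (b + 2) powr (-\<alpha>)"
  have c: "c > 0" using C0 b by (simp add: c_def)
  have Uc: "ennreal c \<le> ennreal (u y)" if y: "y \<in> cball x0 1" for y
  proof -
    have d: "norm (x0 - y) \<le> 1" using y by (simp add: dist_norm)
    have "norm x0 - norm y \<le> norm (x0 - y)" by (rule norm_triangle_ineq2)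
    then have y1: "norm y \<ge> b" using d nx0 by linarith
    have "norm y - norm x0 \<le> norm (y - x0)" by (rule norm_triangle_ineq2)
    then have y2: "norm y \<le> b + 2" using d nx0 by (simp add: norm_minus_commute)
    have "c \<le> C0 / 2 * norm y powr (-\<alpha>)"
      unfolding c_def using C0 \<alpha>0 y1 y2 b by (intro mult_left_mono powr_mono2') auto
    also have "\<dots> \<le> u y" using bnd[OF y1] by simp
    finally show ?thesis by (rule ennreal_leI)
  qed
  have kconst: "kato_class (\<lambda>_::real^'n. ennreal K)" if "K \<ge> 0" for K
    by (rule kato_const[OF u_kato that c Uc])
  define w where "w q = (1 + norm (lattice_pt q)) powr (-\<alpha>)" for q :: "int^'n"
  have wnn: "\<And>q. w q \<ge> 0" by (simp add: w_def)
  have ws: "w summable_on UNIV" unfolding w_def by (rule summable_lattice_powr[OF \<alpha>])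
  define Kc where "Kc = 2 * C0 * 8 powr \<alpha>"
  have Kc: "Kc \<ge> 0" using C0 by (simp add: Kc_def)
  define K where "K = Kc * infsum w UNIV"
  have K: "K \<ge> 0" unfolding K_def using Kc by (intro mult_nonneg_nonneg infsum_nonneg) (auto simp: w_def)
  have Kws: "(\<lambda>q. Kc * w q) summable_on UNIV" by (rule summable_on_cmult_right[OF ws])
  have Kinf: "infsum (\<lambda>q. ennreal (Kc * w q)) UNIV = ennreal K"
    using infsum_ennreal_real[OF Kws] Kc wnn by (simp add: K_def infsum_cmult_right')
  have AEb: "AE \<omega> in M. finite {q. norm (lattice_pt q) / 2 < norm (\<xi> q \<omega>)}"
    by (rule bad_finite_AE[OF P distr \<theta> \<alpha>])
  then show ?thesis
  proof (rule AE_mp)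
    show "AE \<omega> in M. finite {q. norm (lattice_pt q) / 2 < norm (\<xi> q \<omega>)} \<longrightarrow> kato_class_loc (V_xi u \<xi> \<omega>)"
    proof (rule AE_I2, intro impI)
      fix \<omega> assume fin: "finite {q. norm (lattice_pt q) / 2 < norm (\<xi> q \<omega>)}"
      define a where "a q = lattice_pt q + \<xi> q \<omega>" for q
      have Veq: "V_xi u \<xi> \<omega> y = infsum (\<lambda>q. ennreal (u (y - a q))) UNIV" for y
        by (simp add: V_xi_def a_def diff_diff_eq)
      have Vm: "V_xi u \<xi> \<omega> \<in> borel_measurable lebesgue"
      proof -
        have "V_xi u \<xi> \<omega> = (\<lambda>y. \<Sum>n. ennreal (u (y - a (enum_q n))))"
          by (rule ext) (simp add: Veq infsum_q_suminf)
        moreover have "(\<lambda>y. \<Sum>n. ennreal (u (y - a (enum_q n)))) \<in> borel_measurable lebesgue"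
          by (rule borel_measurable_suminf_order, rule measurable_shift_lebesgue'[OF Um])
        ultimately show ?thesis by simp
      qed
      show "kato_class_loc (V_xi u \<xi> \<omega>)"
        unfolding kato_class_loc_def
      proof (intro allI impI)
        fix R :: real assume R: "R > 0"
        define F where "F = {q. norm (lattice_pt q) / 2 < norm (\<xi> q \<omega>)} \<union> {q. norm (lattice_pt q) \<le> 4 * (R + b)}"
        have F: "finite F" unfolding F_def using fin finite_lattice_ball by blast
        have tail: "u (y - a q) \<le> Kc * w q" if "norm y < R" "q \<notin> F" for y q
          unfolding a_def w_def Kc_def
          by (rule tail_pt[OF b \<alpha>0 C0 _ that(1)]) (use that bnd in \<open>auto simp: F_def\<close>)
        have pt: "indicator (ball 0 R) y * V_xi u \<xi> \<omega> y \<le> (\<Sum>q\<in>F. ennreal (u (y - a q))) + ennreal K" for y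
        proof (cases "y \<in> ball 0 R")
          case True
          then have ny: "norm y < R" by simp
          have U: "F \<union> (-F) = UNIV" by auto
          have "V_xi u \<xi> \<omega> y = infsum (\<lambda>q. ennreal (u (y - a q))) (F \<union> (-F))"
            by (simp add: Veq U)
          also have "\<dots> = infsum (\<lambda>q. ennreal (u (y - a q))) F + infsum (\<lambda>q. ennreal (u (y - a q))) (-F)"
            by (rule infsum_Un_disjoint) (auto intro!: nonneg_summable_on_complete)
          also have "infsum (\<lambda>q. ennreal (u (y - a q))) F = (\<Sum>q\<in>F. ennreal (u (y - a q)))"
            using F by simp
          also have "infsum (\<lambda>q. ennreal (u (y - a q))) (-F) \<le> infsum (\<lambda>q. ennreal (Kc * w q)) UNIV"
            by (rule infsum_mono_neutral) (auto intro!: nonneg_summable_on_complete ennreal_leI tail ny)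
          finally show ?thesis using True Kinf by (simp add: add_left_mono)
        qed simp
        have meas: "(\<lambda>y. indicator (ball 0 R) y * V_xi u \<xi> \<omega> y) \<in> borel_measurable lebesgue"
          using Vm by (intro borel_measurable_times_ennreal borel_measurable_indicator) auto
        have "kato_class (\<lambda>y. (\<Sum>q\<in>F. ennreal (u (y - a q))) + ennreal K)"
          by (intro kato_add kato_sum[OF F] kato_shift[OF u_kato] kconst K)
        then show "kato_class (\<lambda>y. indicator (ball 0 R) y * V_xi u \<xi> \<omega> y)"
          by (rule kato_mono[OF _ meas pt])
      qed
    qed
  qed
qed


end
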